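(* Let $k\ge1$ be an integer, assume condition $(\ast)$, and let $\alpha_k=\frac{2k+1}{kb}$. Define $$J(t)=\int_{[0,b]^k}\prod_{i=1}^k g(x_i)\,dx_1\cdots dx_k\int_{\alpha_k\log t\le s_1\le s_2\le\cdots\le s_k\le t}V_0u_1\cdots u_k\,e^{\lambda_0t}\prod_{j=1}^k e^{x_j(t-s_j)}\,ds_1\cdots ds_k,$$ the contribution to $EZ_k(t)$ from first mutation times $s_1\ge\alpha_k\log t$. Then $J(t)=o\!\left(t^{-2k}e^{(\lambda_0+kb)t}\right)$ as $t\to\infty$.
   Context: Here $\lambda_0>0$, $V_0>0$, $u_1,\dots,u_k>0$ are constants, and $g$ is a probability density on $[0,\infty)$. $EZ_k(t)$ (the mean number of type-$k$ cells in the model where $Z_0(t)=V_0e^{\lambda_0t}$ and type-$(j+1)$ cells arise from type-$j$ cells at rate $u_{j+1}$ with birth rate increased by an independent increment of density $g$) equals the same integral with the $s$-region replaced by $0\le s_1\le\cdots\le s_k\le t$. Condition $(\ast)$: for some $b>0$, $g$ vanishes outside $[0,b]$, $g$ is continuous at $b$, $g(b)>0$, and $g\le G$ on $[0,b]$ for some constant $G<\infty$. $f(t)=o(h(t))$ means $f(t)/h(t)\to0$. *)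

theory Defs
  imports "HOL-Analysis.Analysis" "HOL-Library.Landau_Symbols"
begin

text \<open>Vectors (x_1,...,x_k) and (s_1,...,s_k) are functions on the index set {1..k},
  integrated w.r.t. the k-fold product of Lebesgue measure.\<close>

definition s_region :: "nat \<Rightarrow> real \<Rightarrow> real \<Rightarrow> (nat \<Rightarrow> real) set" where
  "s_region k a t = {s \<in> {1..k} \<rightarrow>\<^sub>E UNIV.
      (\<forall>i\<in>{1..k}. a \<le> s i \<and> s i \<le> t) \<and>
      (\<forall>i\<in>{1..k}. \<forall>j\<in>{1..k}. i \<le> j \<longrightarrow> s i \<le> s j)}"

definition J_contrib ::
  "nat \<Rightarrow> real \<Rightarrow> (real \<Rightarrow> real) \<Rightarrow> real \<Rightarrow> (nat \<Rightarrow> real) \<Rightarrow> real \<Rightarrow> real \<Rightarrow> real \<Rightarrow> real" where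
  "J_contrib k b g V0 u lam0 alpha t =
     (LINT x : ({1..k} \<rightarrow>\<^sub>E {0..b}) | PiM {1..k} (\<lambda>_. lborel).
        (\<Prod>i\<in>{1..k}. g (x i)) *
        (LINT s : s_region k (alpha * ln t) t | PiM {1..k} (\<lambda>_. lborel).
           V0 * (\<Prod>i\<in>{1..k}. u i) * exp (lam0 * t) *
           (\<Prod>j\<in>{1..k}. exp (x j * (t - s j)))))"

end

theory Submission imports Defs "HOL-Real_Asymp.Real_Asymp" begin

lemma s_int:
  fixes a t b :: real
  assumes "a \<le> t" "b > 0"
  shows "(\<integral>\<^sup>+y. ennreal (indicator {a..t} y * exp (b*(t-y))) \<partial>lborel) = ennreal ((exp (b*(t-a)) - 1)/b)"
proof -
  have "((\<lambda>y. exp (b*(t-y))) has_integral ((\<lambda>y. - exp (b*(t-y))/b) t - (\<lambda>y. - exp (b*(t-y))/b) a)) {a..t}"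
  proof (rule fundamental_theorem_of_calculus[OF assms(1)])
    fix x assume "x \<in> {a..t}"
    show "((\<lambda>y. - exp (b*(t-y))/b) has_vector_derivative exp (b*(t-x))) (at x within {a..t})"
      unfolding has_real_derivative_iff_has_vector_derivative[symmetric]
      using assms by (auto intro!: derivative_eq_intros)
  qed
  then have "((\<lambda>y. exp (b*(t-y))) has_integral ((exp (b*(t-a)) - 1)/b)) {a..t}"
    using assms by (simp add: field_simps)
  from nn_integral_has_integral_lebesgue[OF _ this] show ?thesis by simp
qed

lemma inner_bound:
  fixes a t b K :: real and k :: nat and x :: "nat \<Rightarrow> real"
  assumes "a \<le> t" "b > 0" "K \<ge> 0" "x \<in> {1..k} \<rightarrow>\<^sub>E {0..b}"
  shows "(LINT s : s_region k a t | PiM {1..k} (\<lambda>_. lborel). K * (\<Prod>j\<in>{1..k}. exp (x j * (t - s j))))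
          \<le> K * ((exp (b*(t-a)) - 1)/b)^k"
proof -
  interpret product_sigma_finite "\<lambda>_. lborel" by standard
  have e1: "exp (b*(t-a)) \<ge> 1" using assms by simp
  have r0: "0 \<le> K * ((exp (b*(t-a)) - 1)/b)^k" using assms e1 by simp
  let ?f = "\<lambda>(j::nat) (y::real). ennreal (indicator {a..t} y * exp (b*(t-y)))"
  have "(\<integral>\<^sup>+s. ennreal (indicator (s_region k a t) s *\<^sub>R (K * (\<Prod>j\<in>{1..k}. exp (x j * (t - s j))))) \<partial>PiM {1..k} (\<lambda>_. lborel))
      \<le> (\<integral>\<^sup>+s. ennreal K * (\<Prod>j\<in>{1..k}. ?f j (s j)) \<partial>PiM {1..k} (\<lambda>_. lborel))"
  proof (rule nn_integral_mono)
    fix s :: "nat \<Rightarrow> real"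
    have eq: "ennreal K * (\<Prod>j\<in>{1..k}. ?f j (s j)) = ennreal (K * (\<Prod>j\<in>{1..k}. indicator {a..t} (s j) * exp (b*(t - s j))))"
    proof -
      have p: "(\<Prod>j\<in>{1..k}. ?f j (s j)) = ennreal (\<Prod>j\<in>{1..k}. indicator {a..t} (s j) * exp (b*(t - s j)))"
        by (rule prod_ennreal) auto
      have n: "0 \<le> (\<Prod>j\<in>{1..k}. indicator {a..t} (s j) * exp (b*(t - s j)))"
        by (rule prod_nonneg) auto
      show ?thesis unfolding p ennreal_mult[OF assms(3) n] ..
    qed
    show "ennreal (indicator (s_region k a t) s *\<^sub>R (K * (\<Prod>j\<in>{1..k}. exp (x j * (t - s j)))))
         \<le> ennreal K * (\<Prod>j\<in>{1..k}. ?f j (s j))"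
    proof (cases "s \<in> s_region k a t")
      case True
      then have sj: "\<And>j. j \<in> {1..k} \<Longrightarrow> a \<le> s j \<and> s j \<le> t" unfolding s_region_def by auto
      have xj: "\<And>j. j \<in> {1..k} \<Longrightarrow> 0 \<le> x j \<and> x j \<le> b" using assms(4) by auto
      have "(\<Prod>j\<in>{1..k}. exp (x j * (t - s j))) \<le> (\<Prod>j\<in>{1..k}. indicator {a..t} (s j) * exp (b*(t - s j)))"
      proof (rule prod_mono)
        fix j assume j: "j \<in> {1..k}"
        show "0 \<le> exp (x j * (t - s j)) \<and> exp (x j * (t - s j)) \<le> indicator {a..t} (s j) * exp (b*(t - s j))"
          using sj[OF j] xj[OF j] by (auto intro!: mult_right_mono)
      qed
      then have "K * (\<Prod>j\<in>{1..k}. exp (x j * (t - s j))) \<le> K * (\<Prod>j\<in>{1..k}. indicator {a..t} (s j) * exp (b*(t - s j)))"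
        using assms(3) by (intro mult_left_mono)
      then have "ennreal (K * (\<Prod>j\<in>{1..k}. exp (x j * (t - s j)))) \<le> ennreal (K * (\<Prod>j\<in>{1..k}. indicator {a..t} (s j) * exp (b*(t - s j))))"
        by (rule ennreal_leI)
      moreover have "indicator (s_region k a t) s *\<^sub>R (K * (\<Prod>j\<in>{1..k}. exp (x j * (t - s j)))) = K * (\<Prod>j\<in>{1..k}. exp (x j * (t - s j)))"
        using True by simp
      ultimately show ?thesis using eq by metis
    next
      case False
      then show ?thesis by simp
    qed
  qed
  also have "\<dots> = ennreal K * (\<integral>\<^sup>+s. (\<Prod>j\<in>{1..k}. ?f j (s j)) \<partial>PiM {1..k} (\<lambda>_. lborel))"
    by (rule nn_integral_cmult) measurable
  also have "\<dots> = ennreal K * (\<Prod>j\<in>{1..k}. integral\<^sup>N lborel (?f j))"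
    by (subst product_nn_integral_prod) auto
  also have "\<dots> = ennreal K * (\<Prod>j\<in>{1..k}. ennreal ((exp (b*(t-a)) - 1)/b))"
    using s_int[OF assms(1,2)] by simp
  also have "\<dots> = ennreal (K * ((exp (b*(t-a)) - 1)/b)^k)"
    using e1 assms by (simp add: prod_ennreal ennreal_mult ennreal_power)
  finally show ?thesis
    unfolding set_lebesgue_integral_def by (intro integral_real_bounded r0)
qed

theorem lemma4:
  fixes k :: nat and b G V0 lam0 :: real and u :: "nat \<Rightarrow> real" and g :: "real \<Rightarrow> real"
  assumes "k \<ge> 1"
    and "lam0 > 0" and "V0 > 0" and "\<forall>i\<in>{1..k}. u i > 0"
    and "g \<in> borel_measurable lborel" and "\<forall>x. g x \<ge> 0" and "\<forall>x<0. g x = 0"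
    and "integrable lborel g" and "integral\<^sup>L lborel g = 1"
    and "b > 0" and "\<forall>x. x \<notin> {0..b} \<longrightarrow> g x = 0"
    and "continuous (at b within {0..b}) g" and "g b > 0"
    and "\<forall>x\<in>{0..b}. g x \<le> G"
  shows "(\<lambda>t. J_contrib k b g V0 u lam0 ((2 * real k + 1) / (real k * b)) t)
           \<in> o[at_top](\<lambda>t. t powr (- 2 * real k) * exp ((lam0 + real k * b) * t))"
proof -
  interpret product_sigma_finite "\<lambda>_. lborel" by standard
  define \<alpha> where "\<alpha> = (2 * real k + 1) / (real k * b)"
  have \<alpha>0: "\<alpha> > 0" using assms(1,10) by (simp add: \<alpha>_def)
  have kba: "real k * b * \<alpha> = 2 * real k + 1" using assms(1,10) by (simp add: \<alpha>_def)
  have G0: "G \<ge> 0"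
  proof -
    have "g b \<le> G" using assms(14,10) by simp
    then show ?thesis using assms(13) by linarith
  qed
  have g0: "\<And>x. g x \<ge> 0" using assms(6) by blast
  define U where "U = V0 * (\<Prod>i\<in>{1..k}. u i)"
  have U0: "U \<ge> 0" using assms(3,4) unfolding U_def by (intro mult_nonneg_nonneg prod_nonneg) (auto simp: less_imp_le)
  define C where "C = G^k * U"
  have C0: "C \<ge> 0" using G0 U0 by (simp add: C_def)
  define E where "E = (\<lambda>t::real. exp ((lam0 + real k * b) * t))"
  define h where "h = (\<lambda>t::real. t powr (-1) * (t powr (- 2 * real k) * E t))"
  let ?A = "{1..k} \<rightarrow>\<^sub>E {0..b}"
  have ev: "eventually (\<lambda>t. 1 < t \<and> \<alpha> * ln t \<le> t) at_top"
  proof -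
    have "eventually (\<lambda>t. \<alpha> * ln t \<le> t) at_top" using \<alpha>0 by real_asymp
    then show ?thesis using eventually_gt_at_top[of 1] by eventually_elim auto
  qed
  have bound: "\<bar>J_contrib k b g V0 u lam0 \<alpha> t\<bar> \<le> C * \<bar>h t\<bar>" if t: "1 < t" "\<alpha> * ln t \<le> t" for t
  proof -
    define a where "a = \<alpha> * ln t"
    define K where "K = V0 * (\<Prod>i\<in>{1..k}. u i) * exp (lam0 * t)"
    have K0: "K \<ge> 0" using U0 unfolding K_def U_def by simp
    define r where "r = K * ((exp (b*(t-a)) - 1)/b)^k"
    have e1: "exp (b*(t-a)) \<ge> 1" using t assms(10) by (simp add: a_def)
    have r0: "r \<ge> 0" using K0 e1 assms(10) by (simp add: r_def)
    define inner where "inner = (\<lambda>x::nat\<Rightarrow>real. LINT s : s_region k a t | PiM {1..k} (\<lambda>_. lborel).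
           K * (\<Prod>j\<in>{1..k}. exp (x j * (t - s j))))"
    have J_eq: "J_contrib k b g V0 u lam0 \<alpha> t = (LINT x : ?A | PiM {1..k} (\<lambda>_. lborel). (\<Prod>i\<in>{1..k}. g (x i)) * inner x)"
      unfolding J_contrib_def inner_def K_def a_def ..
    have inner_le: "inner x \<le> r" if "x \<in> ?A" for x
      unfolding inner_def r_def using inner_bound[OF _ assms(10) K0 that, of a t] t by (simp add: a_def)
    have inner_ge: "inner x \<ge> 0" for x
      unfolding inner_def set_lebesgue_integral_def
      by (rule integral_nonneg_AE) (use K0 in \<open>auto intro!: AE_I2 mult_nonneg_nonneg prod_nonneg\<close>)
    have J0: "J_contrib k b g V0 u lam0 \<alpha> t \<ge> 0"
      unfolding J_eq set_lebesgue_integral_def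
      by (rule integral_nonneg_AE) (use inner_ge g0 in \<open>auto intro!: AE_I2 mult_nonneg_nonneg prod_nonneg\<close>)
    have prodg: "(\<Prod>i\<in>{1..k}. g (x i)) \<le> G^k" if "x \<in> ?A" for x
    proof -
      have "(\<Prod>i\<in>{1..k}. g (x i)) \<le> (\<Prod>i\<in>{1..k}. G)"
        by (rule prod_mono) (use that assms(14) g0 in auto)
      then show ?thesis by simp
    qed
    have "(\<integral>\<^sup>+x. ennreal (indicator ?A x *\<^sub>R ((\<Prod>i\<in>{1..k}. g (x i)) * inner x)) \<partial>PiM {1..k} (\<lambda>_. lborel))
        \<le> (\<integral>\<^sup>+x. ennreal (G^k * r) * indicator ?A x \<partial>PiM {1..k} (\<lambda>_. lborel))"
    proof (rule nn_integral_mono)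
      fix x :: "nat \<Rightarrow> real"
      show "ennreal (indicator ?A x *\<^sub>R ((\<Prod>i\<in>{1..k}. g (x i)) * inner x)) \<le> ennreal (G^k * r) * indicator ?A x"
      proof (cases "x \<in> ?A")
        case True
        have "(\<Prod>i\<in>{1..k}. g (x i)) * inner x \<le> (\<Prod>i\<in>{1..k}. g (x i)) * r"
          by (rule mult_left_mono) (use inner_le[OF True] g0 in \<open>auto intro!: prod_nonneg\<close>)
        also have "\<dots> \<le> G^k * r" by (rule mult_right_mono) (use prodg[OF True] r0 in auto)
        finally show ?thesis using True by (auto intro!: ennreal_leI)
      next
        case False then show ?thesis by simp
      qed
    qed
    also have "\<dots> = ennreal (G^k * r) * emeasure (PiM {1..k} (\<lambda>_. lborel)) ?A"
      by (rule nn_integral_cmult_indicator) measurable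
    also have "\<dots> = ennreal (G^k * r) * (\<Prod>i\<in>{1..k}. emeasure lborel {0..b})"
      by (subst emeasure_PiM) auto
    also have "\<dots> = ennreal (G^k * r * b^k)"
      using assms(10) G0 r0 by (simp add: prod_ennreal ennreal_mult ennreal_power)
    finally have "J_contrib k b g V0 u lam0 \<alpha> t \<le> G^k * r * b^k"
      unfolding J_eq set_lebesgue_integral_def
      by (intro integral_real_bounded) (use G0 r0 assms(10) in auto)
    also have "\<dots> \<le> G^k * (K * (exp (b*(t-a))/b)^k) * b^k"
      unfolding r_def using G0 K0 e1 assms(10)
      by (intro mult_right_mono mult_left_mono power_mono divide_right_mono) auto
    also have "\<dots> = C * exp (lam0 * t) * exp (b*(t-a))^k"
      using assms(10) by (simp add: C_def K_def U_def power_divide)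
    also have "exp (b*(t-a))^k = exp (real k * b * t) * t powr (- (2 * real k + 1))"
    proof -
      have "exp (b*(t-a))^k = exp (real k * (b*(t-a)))" by (simp add: exp_of_nat_mult)
      also have "\<dots> = exp (real k * b * t - (real k * b * \<alpha>) * ln t)"
        by (simp add: a_def algebra_simps)
      also have "\<dots> = exp (real k * b * t) * t powr (- (2 * real k + 1))"
      proof -
        have "t powr (- (2 * real k + 1)) = exp (- (2 * real k + 1) * ln t)"
          using t by (simp add: powr_def)
        moreover have "exp (real k * b * t - (real k * b * \<alpha>) * ln t) = exp (real k * b * t) * exp (- (2 * real k + 1) * ln t)"
          unfolding kba by (simp add: exp_add[symmetric] algebra_simps)
        ultimately show ?thesis by simp
      qed
      finally show ?thesis .
    qed
    also have "C * exp (lam0 * t) * (exp (real k * b * t) * t powr (- (2 * real k + 1))) = C * h t"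
    proof -
      have "t powr (- (2 * real k + 1)) = t powr (-1) * t powr (- 2 * real k)"
        by (subst powr_add[symmetric]) (simp add: algebra_simps)
      moreover have "exp (lam0 * t) * exp (real k * b * t) = E t"
        by (simp add: E_def exp_add[symmetric] algebra_simps)
      moreover have "C * exp (lam0 * t) * (exp (real k * b * t) * t powr (- (2 * real k + 1)))
          = C * t powr (- (2 * real k + 1)) * (exp (lam0 * t) * exp (real k * b * t))"
        by (simp only: mult_ac)
      ultimately show ?thesis unfolding h_def by (simp only: mult_ac)
    qed
    finally have "J_contrib k b g V0 u lam0 \<alpha> t \<le> C * h t" .
    moreover have "h t \<ge> 0" by (simp add: h_def E_def)
    ultimately show ?thesis using J0 by simp
  qed
  have "(\<lambda>t. J_contrib k b g V0 u lam0 \<alpha> t) \<in> O[at_top](h)"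
    by (rule bigoI[of _ C]) (use ev bound in \<open>auto elim!: eventually_mono\<close>)
  moreover have "h \<in> o[at_top](\<lambda>t. t powr (- 2 * real k) * E t)"
  proof -
    have "(\<lambda>t::real. t powr (-1)) \<in> o[at_top](\<lambda>_. 1)" by real_asymp
    from landau_o.small_big_mult[OF this landau_o.big_refl[of "\<lambda>t. t powr (- 2 * real k) * E t"]]
    show ?thesis by (simp add: h_def)
  qed
  ultimately show ?thesis
    unfolding \<alpha>_def E_def by (rule landau_o.big_small_trans)
qed

end
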